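(* For $n\ge 1$ and $1\le k\le n$, the number of parking functions $\pi\in\mathrm{PF}_n$ with $\pi_1=k$ equals $$\sum_{s=0}^{n-k}\binom{n-1}{s}(s+1)^{s-1}(n-s)^{n-s-2}.$$
   Context: A parking function of length $n$ is a sequence $(\pi_1,\dots,\pi_n)$ with $1\le\pi_i\le n$ such that $\#\{t:\pi_t\le i\}\ge i$ for all $1\le i\le n$; $\mathrm{PF}_n$ denotes the set of these. (Here $0^{-1}$ does not occur; for $s=n-1$ the factor $(n-s)^{n-s-2}=1^{-1}=1$.) *)

theory Defs
  imports Complex_Main
begin

text \<open>Parking functions of length n, as lists (\<pi>_1,...,\<pi>_n) with \<pi>_t = xs ! (t-1).\<close>
definition parking_functions :: "nat \<Rightarrow> nat list set" where
  "parking_functions n =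
     {xs. length xs = n \<and> (\<forall>t<n. 1 \<le> xs ! t \<and> xs ! t \<le> n) \<and>
          (\<forall>i\<in>{1..n}. card {t. t < n \<and> xs ! t \<le> i} \<ge> i)}"

end

theory Submission
  imports Defs "HOL-Library.FuncSet"
begin


lemma cycle:
  fixes T :: "nat \<Rightarrow> int" assumes M: "0 < M" and per: "\<And>j. T (j + M) = T j - 1"
  shows "\<exists>!d. d < M \<and> (\<forall>i\<in>{1..<M}. T d \<le> T (d + i))"
proof -
  define \<mu> where "\<mu> = Min (T ` {..<M})"
  have \<mu>le: "\<mu> \<le> T j" if "j < M" for j unfolding \<mu>_def using that by simp
  have "\<mu> \<in> T ` {..<M}" unfolding \<mu>_def using M by (intro Min_in) auto
  then have ex: "\<exists>j. j < M \<and> T j = \<mu>" by auto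
  define d where "d = (LEAST j. j < M \<and> T j = \<mu>)"
  have d: "d < M \<and> T d = \<mu>" unfolding d_def by (rule LeastI_ex[OF ex])
  have below: "\<mu> < T j" if "j < d" for j
  proof -
    have "\<not> (j < M \<and> T j = \<mu>)" using not_less_Least[OF that[unfolded d_def]] by simp
    moreover have "j < M" using that d by simp
    ultimately show ?thesis using \<mu>le[of j] by simp
  qed
  have good: "\<forall>i\<in>{1..<M}. T d \<le> T (d + i)"
  proof
    fix i assume i: "i \<in> {1..<M}"
    show "T d \<le> T (d + i)"
    proof (cases "d + i < M")
      case True then show ?thesis using \<mu>le d by simp
    next
      case False
      define j where "j = d + i - M"
      have "j < d" "d + i = j + M" using i False unfolding j_def by auto
      then show ?thesis using below[of j] per[of j] d by simp
    qed
  qed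
  show ?thesis
  proof (rule ex1I[of _ d])
    show "d < M \<and> (\<forall>i\<in>{1..<M}. T d \<le> T (d + i))" using d good by simp
  next
    fix d' assume h: "d' < M \<and> (\<forall>i\<in>{1..<M}. T d' \<le> T (d' + i))"
    show "d' = d"
    proof (rule ccontr)
      assume "d' \<noteq> d"
      then consider "d' < d" | "d < d'" by linarith
      then show False
      proof cases
        case 1
        have "d - d' \<in> {1..<M}" using 1 d by auto
        then have "T d' \<le> T (d' + (d - d'))" using h by blast
        then show False using below[OF 1] d 1 by simp
      next
        case 2
        have "d + M - d' \<in> {1..<M}" using 2 d h by auto
        then have "T d' \<le> T (d' + (d + M - d'))" using h by blast
        moreover have "d' + (d + M - d') = d + M" using h by simp
        ultimately show False using per[of d] d \<mu>le[of d'] h by simp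
      qed
    qed
  qed
qed


definition pfc :: "'a set \<Rightarrow> ('a \<Rightarrow> nat) \<Rightarrow> bool" where
  "pfc I f = (\<forall>i\<in>{1..card I}. i \<le> card {t\<in>I. f t \<le> i})"

definition pfs :: "'a set \<Rightarrow> ('a \<Rightarrow> nat) set" where
  "pfs I = {f \<in> I \<rightarrow>\<^sub>E {1..card I}. pfc I f}"

definition rot :: "nat \<Rightarrow> 'a set \<Rightarrow> nat \<Rightarrow> ('a \<Rightarrow> nat) \<Rightarrow> 'a \<Rightarrow> nat" where
  "rot M I c f = restrict (\<lambda>t. (f t + c - 1) mod M + 1) I"

lemma card_less_sum:
  fixes g :: "'a \<Rightarrow> nat"
  assumes "finite I"
  shows "card {t\<in>I. g t < i} = (\<Sum>v<i. card {t\<in>I. g t = v})"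
proof (induction i)
  case 0 then show ?case by simp
next
  case (Suc i)
  have "{t\<in>I. g t < Suc i} = {t\<in>I. g t < i} \<union> {t\<in>I. g t = i}" by auto
  moreover have "card ({t\<in>I. g t < i} \<union> {t\<in>I. g t = i}) = card {t\<in>I. g t < i} + card {t\<in>I. g t = i}"
    using assms by (intro card_Un_disjoint) auto
  ultimately show ?case using Suc by simp
qed

lemma sum_split_shift: fixes g :: "nat \<Rightarrow> int" shows "(\<Sum>v<d+i. g v) = (\<Sum>v<d. g v) + (\<Sum>v<i. g (v + d))"
  by (induction i) (auto simp: add.commute)

lemma mod_lt2: "(a::nat) < 2 * M \<Longrightarrow> a mod M = (if a < M then a else a - M)"
  by (metis le_mod_geq less_diff_conv2 mod_less mult_2 not_le le_add_diff_inverse)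

lemma fiber_arith:
  fixes x v c M :: nat
  assumes "x < M" "v < M" "c \<le> M"
  shows "((x + c) mod M = v) = (x = (v + (M - c)) mod M)"
proof -
  have a: "(x + c) mod M = (if x + c < M then x + c else x + c - M)" using assms by (intro mod_lt2) auto
  have b: "(v + (M - c)) mod M = (if v + (M - c) < M then v + (M - c) else v + (M - c) - M)"
    using assms by (intro mod_lt2) auto
  show ?thesis unfolding a b using assms
    by (cases "x + c < M"; cases "v + (M - c) < M") (simp_all, linarith+)
qed

lemma rot_rot:
  assumes f: "f \<in> I \<rightarrow>\<^sub>E {1..M}" and ab: "a + b = M" and M: "0 < M"
  shows "rot M I a (rot M I b f) = f"
proof
  fix t
  show "rot M I a (rot M I b f) t = f t"
  proof (cases "t \<in> I")
    case True
    then have ft: "1 \<le> f t" "f t \<le> M" using f by auto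
    define x where "x = f t - 1"
    have fx: "f t = x + 1" "x < M" using ft unfolding x_def by auto
    have "((x + b) mod M + 1 + a - 1) mod M = x"
    proof -
      have "((x + b) mod M + 1 + a - 1) mod M = ((x + b) mod M + a) mod M" by simp
      also have "\<dots> = (x + b + a) mod M" by (simp add: mod_add_left_eq)
      also have "\<dots> = (x + M) mod M" proof -
        have eq: "x + b + a = x + M" using ab by simp
        show ?thesis unfolding eq by simp
      qed
      also have "\<dots> = x" using fx by simp
      finally show ?thesis .
    qed
    moreover have "rot M I b f t = (x + b) mod M + 1" using True fx(1) unfolding rot_def by simp
    ultimately show ?thesis using True fx(1) unfolding rot_def by simp
  next
    case False
    have "f t = undefined" by (rule PiE_arb[OF f False])
    then show ?thesis using False unfolding rot_def by simp
  qed
qed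

lemma rot_in:
  assumes "0 < M" shows "rot M I c f \<in> I \<rightarrow>\<^sub>E {1..M}"
  unfolding rot_def using assms by (auto simp: Suc_le_eq)



definition mmf :: "nat \<Rightarrow> 'a set \<Rightarrow> ('a \<Rightarrow> nat) \<Rightarrow> nat \<Rightarrow> nat" where
  "mmf M I f w = card {t\<in>I. f t = w mod M + 1}"

definition TTf :: "nat \<Rightarrow> 'a set \<Rightarrow> ('a \<Rightarrow> nat) \<Rightarrow> nat \<Rightarrow> int" where
  "TTf M I f j = (\<Sum>v<j. int (mmf M I f v) - 1)"

lemma rot_card:
  assumes I: "finite I" and f: "f \<in> I \<rightarrow>\<^sub>E {1..M}" and c: "c \<le> M" and i: "i \<le> M"
  shows "card {t\<in>I. rot M I c f t \<le> i} = (\<Sum>v<i. mmf M I f (v + (M - c)))"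
proof -
  have "{t\<in>I. rot M I c f t \<le> i} = {t\<in>I. (f t + c - 1) mod M < i}" by (auto simp: rot_def)
  then have "card {t\<in>I. rot M I c f t \<le> i} = (\<Sum>v<i. card {t\<in>I. (f t + c - 1) mod M = v})"
    using card_less_sum[OF I] by simp
  also have "\<dots> = (\<Sum>v<i. mmf M I f (v + (M - c)))"
  proof (rule sum.cong)
    fix v assume v: "v \<in> {..<i}"
    have "{t\<in>I. (f t + c - 1) mod M = v} = {t\<in>I. f t = (v + (M - c)) mod M + 1}"
    proof (intro Collect_cong conj_cong refl)
      fix t assume t: "t \<in> I"
      then have ft: "1 \<le> f t" "f t \<le> M" using f by auto
      have e: "f t + c - 1 = (f t - 1) + c" using ft by simp
      have "((f t - 1 + c) mod M = v) = (f t - 1 = (v + (M - c)) mod M)"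
        using fiber_arith[of "f t - 1" M v c] ft v i c by simp
      then show "((f t + c - 1) mod M = v) = (f t = (v + (M - c)) mod M + 1)"
        unfolding e using ft by auto
    qed
    then show "card {t\<in>I. (f t + c - 1) mod M = v} = mmf M I f (v + (M - c))"
      unfolding mmf_def by simp
  qed simp
  finally show ?thesis .
qed

lemma mmf_per: "mmf M I f (v + M) = mmf M I f v"
  unfolding mmf_def by simp

lemma sum_mmf:
  assumes I: "finite I" and f: "f \<in> I \<rightarrow>\<^sub>E {1..M}"
  shows "(\<Sum>v<M. mmf M I f v) = card I"
proof -
  have "{t\<in>I. f t - 1 < M} = I" using f by force
  then have "card I = (\<Sum>v<M. card {t\<in>I. f t - 1 = v})"
    using card_less_sum[OF I, of "\<lambda>t. f t - 1" M] by simp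
  also have "\<dots> = (\<Sum>v<M. mmf M I f v)"
  proof (rule sum.cong)
    fix v assume "v \<in> {..<M}"
    then have "{t\<in>I. f t - 1 = v} = {t\<in>I. f t = v mod M + 1}" using f by force
    then show "card {t\<in>I. f t - 1 = v} = mmf M I f v" unfolding mmf_def by simp
  qed simp
  finally show ?thesis by simp
qed

lemma TTf_per:
  assumes I: "finite I" and f: "f \<in> I \<rightarrow>\<^sub>E {1..M}" and M: "M = Suc (card I)"
  shows "TTf M I f (j + M) = TTf M I f j - 1"
proof (induction j)
  case 0
  have "TTf M I f M = int (\<Sum>v<M. mmf M I f v) - int M"
    unfolding TTf_def by (simp add: sum_subtractf)
  then have "TTf M I f M = int (card I) - int M" unfolding sum_mmf[OF I f] .
  moreover have "TTf M I f 0 = 0" by (simp add: TTf_def)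
  ultimately show ?case using M by simp
next
  case (Suc j)
  have "TTf M I f (Suc j + M) = TTf M I f (j + M) + (int (mmf M I f (j + M)) - 1)"
    by (simp add: TTf_def)
  then show ?case using Suc mmf_per[of M I f j] by (simp add: TTf_def)
qed

lemma pfc_rot:
  assumes I: "finite I" and f: "f \<in> I \<rightarrow>\<^sub>E {1..M}" and M: "M = Suc (card I)" and c: "c \<le> M"
  shows "pfc I (rot M I c f) = (\<forall>i\<in>{1..<M}. TTf M I f (M - c) \<le> TTf M I f (M - c + i))"
proof -
  have "(i \<le> card {t\<in>I. rot M I c f t \<le> i}) = (TTf M I f (M - c) \<le> TTf M I f (M - c + i))"
    if i: "i \<in> {1..<M}" for i
  proof -
    have cc: "card {t\<in>I. rot M I c f t \<le> i} = (\<Sum>v<i. mmf M I f (v + (M - c)))"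
      using rot_card[OF I f c] i by simp
    have "TTf M I f (M - c + i) = TTf M I f (M - c) + (\<Sum>v<i. int (mmf M I f (v + (M - c))) - 1)"
      unfolding TTf_def by (rule sum_split_shift)
    moreover have "(\<Sum>v<i. int (mmf M I f (v + (M - c))) - 1) = int (card {t\<in>I. rot M I c f t \<le> i}) - int i"
      unfolding cc by (simp add: sum_subtractf)
    ultimately show ?thesis by simp
  qed
  moreover have "{1..card I} = {1..<M}" using M by auto
  ultimately show ?thesis unfolding pfc_def by auto
qed



lemma pfs_eq:
  assumes I: "finite I"
  shows "pfs I = {f \<in> I \<rightarrow>\<^sub>E {1..Suc (card I)}. pfc I f}"
proof
  show "pfs I \<subseteq> {f \<in> I \<rightarrow>\<^sub>E {1..Suc (card I)}. pfc I f}" unfolding pfs_def by (auto simp: PiE_def Pi_def)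
next
  show "{f \<in> I \<rightarrow>\<^sub>E {1..Suc (card I)}. pfc I f} \<subseteq> pfs I"
  proof
    fix f assume f: "f \<in> {f \<in> I \<rightarrow>\<^sub>E {1..Suc (card I)}. pfc I f}"
    have "\<forall>t\<in>I. f t \<le> card I"
    proof (cases "card I = 0")
      case True then show ?thesis using I by simp
    next
      case False
      then have "card I \<le> card {t\<in>I. f t \<le> card I}" using f unfolding pfc_def by auto
      then have "{t\<in>I. f t \<le> card I} = I" using I by (intro card_seteq) auto
      then show ?thesis by blast
    qed
    then show "f \<in> pfs I" using f unfolding pfs_def by (auto simp: PiE_def Pi_def)
  qed
qed

lemma uniq_shift:
  assumes I: "finite I" and f: "f \<in> I \<rightarrow>\<^sub>E {1..M}" and M: "M = Suc (card I)"
  shows "\<exists>!c. c < M \<and> pfc I (rot M I c f)"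
proof -
  define G where "G d = (\<forall>i\<in>{1..<M}. TTf M I f d \<le> TTf M I f (d + i))" for d
  have per: "\<And>j. TTf M I f (j + M) = TTf M I f j - 1" using TTf_per[OF I f M] .
  have cyc: "\<exists>!d. d < M \<and> G d" unfolding G_def using cycle[of M "TTf M I f"] per M by simp
  have GM: "G M = G 0"
  proof -
    have "TTf M I f (M + i) = TTf M I f i - 1" for i using per[of i] by (simp add: add.commute)
    then have "(TTf M I f M \<le> TTf M I f (M + i)) = (TTf M I f 0 \<le> TTf M I f i)" for i
      using per[of 0] by auto
    then show ?thesis unfolding G_def by simp
  qed
  define \<delta> where "\<delta> c = (if c = 0 then 0 else M - c)" for c
  have pr: "pfc I (rot M I c f) = G (\<delta> c)" if "c < M" for c
    using pfc_rot[OF I f M, of c] that GM unfolding G_def[symmetric] \<delta>_def by auto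
  have \<delta>lt: "\<delta> c < M" if "c < M" for c using that M unfolding \<delta>_def by auto
  have \<delta>inj: "c1 = c2" if "c1 < M" "c2 < M" "\<delta> c1 = \<delta> c2" for c1 c2
    using that unfolding \<delta>_def by (auto split: if_splits)
  obtain d where d: "d < M" "G d" using cyc by blast
  define c where "c = (if d = 0 then 0 else M - d)"
  have c: "c < M" "\<delta> c = d" using d M unfolding c_def \<delta>_def by auto
  show ?thesis
  proof (rule ex1I[of _ c])
    show "c < M \<and> pfc I (rot M I c f)" using c d pr by simp
  next
    fix c' assume h: "c' < M \<and> pfc I (rot M I c' f)"
    then have "G (\<delta> c')" using pr[of c'] by blast
    then have "\<delta> c' = d" using cyc d \<delta>lt h by blast
    then show "c' = c" using \<delta>inj c h by metis
  qed
qed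

lemma pollak:
  assumes I: "finite I"
  shows "card (pfs I) * Suc (card I) = Suc (card I) ^ card I"
proof -
  define M where "M = Suc (card I)"
  define U where "U = I \<rightarrow>\<^sub>E {1..M}"
  have finU: "finite U" unfolding U_def using I by (intro finite_PiE) auto
  have cardU: "card U = M ^ card I" unfolding U_def using I by (simp add: card_PiE)
  define S where "S = Sigma {..<M} (\<lambda>c. {f\<in>U. pfc I (rot M I c f)})"
  have "card S = (\<Sum>c<M. card {f\<in>U. pfc I (rot M I c f)})"
    unfolding S_def using finU by (subst card_SigmaI) auto
  also have "\<dots> = (\<Sum>c<M. card (pfs I))"
  proof (rule sum.cong)
    fix c assume c: "c \<in> {..<M}"
    have "bij_betw (rot M I c) {f\<in>U. pfc I (rot M I c f)} {g\<in>U. pfc I g}"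
    proof (rule bij_betw_byWitness[where f'="rot M I (M - c)"])
      show "\<forall>a\<in>{f \<in> U. pfc I (rot M I c f)}. rot M I (M - c) (rot M I c a) = a"
        using c unfolding U_def by (auto intro!: rot_rot simp: M_def)
      show "\<forall>a'\<in>{g \<in> U. pfc I g}. rot M I c (rot M I (M - c) a') = a'"
        using c unfolding U_def by (auto intro!: rot_rot simp: M_def)
      show "rot M I c ` {f \<in> U. pfc I (rot M I c f)} \<subseteq> {g \<in> U. pfc I g}"
        unfolding U_def using rot_in[of M I] by (auto simp: M_def)
      show "rot M I (M - c) ` {g \<in> U. pfc I g} \<subseteq> {f \<in> U. pfc I (rot M I c f)}"
        unfolding U_def using rot_in[of M I] c by (auto simp: M_def rot_rot)
    qed
    then have "card {f\<in>U. pfc I (rot M I c f)} = card {g\<in>U. pfc I g}" by (rule bij_betw_same_card)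
    also have "{g\<in>U. pfc I g} = pfs I" unfolding U_def M_def using pfs_eq[OF I] by simp
    finally show "card {f\<in>U. pfc I (rot M I c f)} = card (pfs I)" .
  qed simp
  finally have cS: "card S = M * card (pfs I)" by simp
  have "bij_betw snd S U"
  proof (rule bij_betw_imageI)
    show "inj_on snd S"
    proof (rule inj_onI)
      fix x y assume x: "x \<in> S" and y: "y \<in> S" and e: "snd x = snd y"
      obtain c f where xe: "x = (c, f)" by (cases x)
      obtain c' f' where ye: "y = (c', f')" by (cases y)
      have "f \<in> U" "c < M" "pfc I (rot M I c f)" "c' < M" "pfc I (rot M I c' f)"
        using x y e unfolding xe ye S_def by auto
      then have "c = c'" using uniq_shift[OF I _ M_def] unfolding U_def by blast
      then show "x = y" using xe ye e by simp
    qed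
    show "snd ` S = U"
    proof
      show "snd ` S \<subseteq> U" unfolding S_def by auto
      show "U \<subseteq> snd ` S"
      proof
        fix f assume f: "f \<in> U"
        then obtain c where "c < M" "pfc I (rot M I c f)" using uniq_shift[OF I _ M_def] unfolding U_def by blast
        then have "(c, f) \<in> S" unfolding S_def using f by simp
        then show "f \<in> snd ` S" by force
      qed
    qed
  qed
  then have "card S = card U" by (rule bij_betw_same_card)
  then show ?thesis using cS cardU unfolding M_def by (simp add: mult.commute)
qed

lemma card_pfs:
  assumes I: "finite I"
  shows "card (pfs I) = Suc (card I) ^ (card I - 1)"
proof (cases "card I")
  case 0 then show ?thesis using pollak[OF I] by simp
next
  case (Suc m)
  then have "card (pfs I) * Suc (card I) = Suc (card I) ^ m * Suc (card I)" using pollak[OF I] by simp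
  then have "card (pfs I) = Suc (card I) ^ m" by (metis mult_cancel2 nat.simps(3))
  then show ?thesis using Suc by simp
qed



definition merge :: "'a set \<Rightarrow> 'a \<Rightarrow> nat \<Rightarrow> 'a set \<times> ('a \<Rightarrow> nat) \<times> ('a \<Rightarrow> nat) \<Rightarrow> 'a \<Rightarrow> nat" where
  "merge I t0 k x = (\<lambda>t. if t \<in> I then (if t = t0 then k else if t \<in> fst x then fst (snd x) t else snd (snd x) t + k) else undefined)"

definition splt :: "'a set \<Rightarrow> 'a \<Rightarrow> nat \<Rightarrow> ('a \<Rightarrow> nat) \<Rightarrow> 'a set \<times> ('a \<Rightarrow> nat) \<times> ('a \<Rightarrow> nat)" where
  "splt I t0 k f = ({t\<in>I. f t < k}, restrict f {t\<in>I. f t < k}, restrict (\<lambda>t. f t - k) (I - insert t0 {t\<in>I. f t < k}))"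

lemma merge_good:
  assumes I: "finite I" and t0: "t0 \<in> I" and k: "1 \<le> k" "k \<le> card I"
    and L: "L \<subseteq> I - {t0}" "card L = k - 1"
    and g: "g \<in> pfs L" and h: "h \<in> pfs (I - insert t0 L)"
  shows "merge I t0 k (L, g, h) \<in> pfs I \<and> merge I t0 k (L, g, h) t0 = k
     \<and> card {t\<in>I. merge I t0 k (L, g, h) t \<le> k} = k
     \<and> splt I t0 k (merge I t0 k (L, g, h)) = (L, g, h)"
proof -
  define n where "n = card I"
  define R where "R = I - insert t0 L"
  define f where "f = merge I t0 k (L, g, h)"
  have finL: "finite L" using L I finite_subset by blast
  have t0L: "t0 \<notin> L" using L by auto
  have cins: "card (insert t0 L) = k" using finL t0L L k by simp
  have cR: "card R = n - k" unfolding R_def n_def using cins L t0 I finL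
    by (subst card_Diff_subset) auto
  have gP: "g \<in> L \<rightarrow>\<^sub>E {1..card L}" "pfc L g" using g unfolding pfs_def by simp_all
  have hP: "h \<in> R \<rightarrow>\<^sub>E {1..card R}" "pfc R h" using h unfolding pfs_def R_def by simp_all
  have gv: "g t \<in> {1..k-1}" if "t \<in> L" for t using PiE_mem[OF gP(1) that] L(2) by simp
  have hv: "h t \<in> {1..n-k}" if "t \<in> R" for t using PiE_mem[OF hP(1) that] cR by simp
  have gpf: "i \<le> card {t\<in>L. g t \<le> i}" if "i \<in> {1..k-1}" for i
    using gP(2) that L(2) unfolding pfc_def by simp
  have hpf: "i \<le> card {t\<in>R. h t \<le> i}" if "i \<in> {1..n-k}" for i
    using hP(2) that cR unfolding pfc_def by simp
  have gext: "g t = undefined" if "t \<notin> L" for t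
  proof -
    have "g \<in> L \<rightarrow>\<^sub>E {1..card L}" using g unfolding pfs_def by simp
    then show ?thesis using that by (rule PiE_arb)
  qed
  have hext: "h t = undefined" if "t \<notin> R" for t
  proof -
    have "h \<in> R \<rightarrow>\<^sub>E {1..card R}" using h unfolding pfs_def R_def by simp
    then show ?thesis using that by (rule PiE_arb)
  qed
  have fI: "f t = (if t = t0 then k else if t \<in> L then g t else h t + k)" if "t \<in> I" for t
    using that unfolding f_def merge_def by simp
  have fO: "f t = undefined" if "t \<notin> I" for t using that unfolding f_def merge_def by simp
  have RI: "t \<in> R \<longleftrightarrow> t \<in> I \<and> t \<noteq> t0 \<and> t \<notin> L" for t unfolding R_def by auto
  have LI: "t \<in> L \<Longrightarrow> t \<in> I \<and> t \<noteq> t0" for t using L by auto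
  have low: "{t\<in>I. f t < k} = L"
  proof (intro set_eqI iffI)
    fix t assume "t \<in> {t\<in>I. f t < k}"
    then show "t \<in> L" using fI[of t] by (auto split: if_splits)
  next
    fix t assume t: "t \<in> L"
    then show "t \<in> {t\<in>I. f t < k}" using fI[of t] gv[OF t] LI[OF t] k by auto
  qed
  have fpf: "f \<in> pfs I"
    unfolding pfs_def pfc_def n_def[symmetric]
  proof (intro CollectI conjI ballI)
    show "f \<in> I \<rightarrow>\<^sub>E {1..n}"
    proof (rule PiE_I)
      fix t assume t: "t \<in> I"
      show "f t \<in> {1..n}"
      proof (cases "t = t0")
        case True then show ?thesis using fI[OF t] k n_def by auto
      next
        case False
        show ?thesis
        proof (cases "t \<in> L")
          case True then show ?thesis using fI[OF t] gv[OF True] k n_def False by auto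
        next
          case nL: False
          then have "t \<in> R" using RI t False by simp
          then show ?thesis using fI[OF t] hv[of t] nL False k n_def by auto
        qed
      qed
    next
      fix t assume "t \<notin> I" then show "f t = undefined" by (rule fO)
    qed
  next
    fix i assume i: "i \<in> {1..n}"
    show "i \<le> card {t\<in>I. f t \<le> i}"
    proof (cases "i < k")
      case True
      have "{t\<in>I. f t \<le> i} = {t\<in>L. g t \<le> i}"
      proof (intro set_eqI iffI)
        fix t assume "t \<in> {t\<in>I. f t \<le> i}"
        then show "t \<in> {t\<in>L. g t \<le> i}" using fI[of t] True by (auto split: if_splits)
      next
        fix t assume "t \<in> {t\<in>L. g t \<le> i}"
        then show "t \<in> {t\<in>I. f t \<le> i}" using fI[of t] LI[of t] by auto
      qed
      then show ?thesis using gpf[of i] i True by simp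
    next
      case False
      have eq: "{t\<in>I. f t \<le> i} = insert t0 L \<union> {t\<in>R. h t \<le> i - k}"
      proof (intro set_eqI iffI)
        fix t assume t: "t \<in> {t\<in>I. f t \<le> i}"
        show "t \<in> insert t0 L \<union> {t\<in>R. h t \<le> i - k}"
        proof (cases "t = t0 \<or> t \<in> L")
          case True then show ?thesis by auto
        next
          case F: False
          then have "t \<in> R" using RI t by auto
          then show ?thesis using t fI[of t] F by auto
        qed
      next
        fix t assume t: "t \<in> insert t0 L \<union> {t\<in>R. h t \<le> i - k}"
        show "t \<in> {t\<in>I. f t \<le> i}"
        proof (cases "t = t0")
          case True then show ?thesis using t0 fI[of t0] False by auto
        next
          case nt0: False
          show ?thesis
          proof (cases "t \<in> L")
            case True then show ?thesis using fI[of t] LI[of t] gv[of t] False by auto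
          next
            case nL: False
            then have "t \<in> R" "h t \<le> i - k" using t nt0 by auto
            then show ?thesis using fI[of t] RI[of t] nL nt0 False hv[of t] by auto
          qed
        qed
      qed
      have finR: "finite R" unfolding R_def using I by simp
      have "card {t\<in>I. f t \<le> i} = k + card {t\<in>R. h t \<le> i - k}"
        unfolding eq using cins finL finR
        by (subst card_Un_disjoint) (auto simp: R_def)
      moreover have "i - k \<le> card {t\<in>R. h t \<le> i - k}"
      proof (cases "i = k")
        case True then show ?thesis by simp
      next
        case False
        have "1 \<le> i - k" "i - k \<le> n - k" using False \<open>\<not> i < k\<close> i by auto
        then show ?thesis using hpf[of "i - k"] by simp
      qed
      ultimately show ?thesis using False by simp
    qed
  qed
  have ft0: "f t0 = k" using fI[OF t0] by simp
  have ck: "card {t\<in>I. f t \<le> k} = k"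
  proof -
    have "{t\<in>I. f t \<le> k} = insert t0 L"
    proof (intro set_eqI iffI)
      fix t assume t: "t \<in> {t\<in>I. f t \<le> k}"
      show "t \<in> insert t0 L"
      proof (rule ccontr)
        assume "t \<notin> insert t0 L"
        then have "t \<in> R" using RI t by auto
        then show False using t fI[of t] hv[of t] \<open>t \<notin> insert t0 L\<close> by auto
      qed
    next
      fix t assume "t \<in> insert t0 L"
      then show "t \<in> {t\<in>I. f t \<le> k}" using fI[of t] LI[of t] t0 gv[of t] by auto
    qed
    then show ?thesis using cins by simp
  qed
  have sp: "splt I t0 k f = (L, g, h)"
  proof -
    have "restrict f L = g"
    proof
      fix t show "restrict f L t = g t" using fI[of t] LI[of t] gext[of t] by auto
    qed
    moreover have "restrict (\<lambda>t. f t - k) R = h"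
    proof
      fix t show "restrict (\<lambda>t. f t - k) R t = h t" using fI[of t] RI[of t] hext[of t] by auto
    qed
    ultimately show ?thesis unfolding splt_def low R_def by simp
  qed
  show ?thesis using fpf ft0 ck sp unfolding f_def by simp
qed



lemma splt_good:
  assumes I: "finite I" and t0: "t0 \<in> I" and k: "1 \<le> k" "k \<le> card I"
    and f: "f \<in> pfs I" and ft0: "f t0 = k" and ck: "card {t\<in>I. f t \<le> k} = k"
  shows "\<exists>L g h. splt I t0 k f = (L, g, h) \<and> L \<subseteq> I - {t0} \<and> card L = k - 1
     \<and> g \<in> pfs L \<and> h \<in> pfs (I - insert t0 L) \<and> merge I t0 k (L, g, h) = f"
proof -
  define n where "n = card I"
  define L where "L = {t\<in>I. f t < k}"
  define R where "R = I - insert t0 L"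
  define g where "g = restrict f L"
  define h where "h = restrict (\<lambda>t. f t - k) R"
  have fP: "f \<in> I \<rightarrow>\<^sub>E {1..n}" "pfc I f" using f unfolding pfs_def n_def by simp_all
  have fv: "f t \<in> {1..n}" if "t \<in> I" for t using PiE_mem[OF fP(1) that] .
  have fext: "f t = undefined" if "t \<notin> I" for t using fP(1) that by (rule PiE_arb)
  have fpf: "i \<le> card {t\<in>I. f t \<le> i}" if "i \<in> {1..n}" for i using fP(2) that unfolding pfc_def n_def by simp
  have finL: "finite L" unfolding L_def using I by simp
  have LI: "L \<subseteq> I - {t0}" unfolding L_def using ft0 by auto
  have sub: "L \<subseteq> {t\<in>I. f t \<le> k} - {t0}" unfolding L_def using ft0 by auto
  have "card L \<le> k - 1"
  proof -
    have "card L \<le> card ({t\<in>I. f t \<le> k} - {t0})" using sub I by (intro card_mono) auto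
    also have "\<dots> = k - 1" using ck t0 ft0 by simp
    finally show ?thesis .
  qed
  moreover have "k - 1 \<le> card L"
  proof (cases "k = 1")
    case True then show ?thesis by simp
  next
    case False
    have "{t\<in>I. f t \<le> k - 1} = L" unfolding L_def using k by auto
    moreover have "k - 1 \<in> {1..n}" using False k n_def by auto
    ultimately show ?thesis using fpf[of "k - 1"] by simp
  qed
  ultimately have cL: "card L = k - 1" by simp
  have t0L: "t0 \<notin> L" using LI by auto
  have cins: "card (insert t0 L) = k" using cL t0L finL k by simp
  have le_eq: "{t\<in>I. f t \<le> k} = insert t0 L"
  proof -
    have "insert t0 L \<subseteq> {t\<in>I. f t \<le> k}" unfolding L_def using t0 ft0 by auto
    moreover have "card {t\<in>I. f t \<le> k} \<le> card (insert t0 L)" using ck cins by simp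
    ultimately show ?thesis using I by (intro card_seteq[symmetric]) auto
  qed
  have RI: "t \<in> R \<longleftrightarrow> t \<in> I \<and> k < f t" for t
  proof
    assume "t \<in> R"
    then have "t \<in> I" "t \<notin> insert t0 L" unfolding R_def by auto
    then show "t \<in> I \<and> k < f t" using le_eq by (metis (mono_tags, lifting) mem_Collect_eq not_le)
  next
    assume a: "t \<in> I \<and> k < f t"
    then have "t \<notin> {t\<in>I. f t \<le> k}" by simp
    then have "t \<notin> insert t0 L" using le_eq by simp
    then show "t \<in> R" unfolding R_def using a by simp
  qed
  have cR: "card R = n - k" unfolding R_def n_def using cins LI t0 I finL
    by (subst card_Diff_subset) auto
  have gpfs: "g \<in> pfs L" unfolding pfs_def pfc_def
  proof (intro CollectI conjI ballI)
    show "g \<in> L \<rightarrow>\<^sub>E {1..card L}"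
    proof (rule PiE_I)
      fix t assume t: "t \<in> L"
      then have "t \<in> I" "f t < k" unfolding L_def by auto
      then show "g t \<in> {1..card L}" using fv[of t] t cL unfolding g_def by auto
    next
      fix t assume "t \<notin> L" then show "g t = undefined" unfolding g_def by simp
    qed
  next
    fix i assume i: "i \<in> {1..card L}"
    have "{t\<in>L. g t \<le> i} = {t\<in>I. f t \<le> i}" unfolding g_def L_def using i cL by auto
    moreover have "i \<in> {1..n}" using i cL k n_def by auto
    ultimately show "i \<le> card {t\<in>L. g t \<le> i}" using fpf[of i] by simp
  qed
  have hpfs: "h \<in> pfs R" unfolding pfs_def pfc_def
  proof (intro CollectI conjI ballI)
    show "h \<in> R \<rightarrow>\<^sub>E {1..card R}"
    proof (rule PiE_I)
      fix t assume t: "t \<in> R"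
      then have "t \<in> I" "k < f t" using RI by auto
      then show "h t \<in> {1..card R}" using fv[of t] t cR unfolding h_def by auto
    next
      fix t assume "t \<notin> R" then show "h t = undefined" unfolding h_def by simp
    qed
  next
    fix i assume i: "i \<in> {1..card R}"
    have eq: "{t\<in>R. h t \<le> i} = {t\<in>I. f t \<le> i + k} - insert t0 L"
    proof (intro set_eqI iffI)
      fix t assume t: "t \<in> {t\<in>R. h t \<le> i}"
      then have "t \<in> I" "k < f t" using RI by auto
      then show "t \<in> {t\<in>I. f t \<le> i + k} - insert t0 L" using t unfolding h_def R_def by auto
    next
      fix t assume t: "t \<in> {t\<in>I. f t \<le> i + k} - insert t0 L"
      then have "t \<in> R" unfolding R_def by auto
      then show "t \<in> {t\<in>R. h t \<le> i}" using t unfolding h_def by auto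
    qed
    have "{t\<in>I. f t \<le> k} \<subseteq> {t\<in>I. f t \<le> i + k}" by auto
    then have "insert t0 L \<subseteq> {t\<in>I. f t \<le> i + k}" using le_eq by simp
    then have "card {t\<in>R. h t \<le> i} = card {t\<in>I. f t \<le> i + k} - k"
      unfolding eq using cins I by (subst card_Diff_subset) (auto intro: finite_subset)
    moreover have "i + k \<le> card {t\<in>I. f t \<le> i + k}" using fpf[of "i + k"] i cR k n_def by auto
    ultimately show "i \<le> card {t\<in>R. h t \<le> i}" by simp
  qed
  have mg: "merge I t0 k (L, g, h) = f"
  proof
    fix t show "merge I t0 k (L, g, h) t = f t"
    proof (cases "t \<in> I")
      case False then show ?thesis using fext[of t] unfolding merge_def by simp
    next
      case True
      show ?thesis
      proof (cases "t = t0")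
        case True then show ?thesis using \<open>t \<in> I\<close> ft0 unfolding merge_def by simp
      next
        case nt0: False
        show ?thesis
        proof (cases "t \<in> L")
          case True then show ?thesis using \<open>t \<in> I\<close> nt0 unfolding merge_def g_def by simp
        next
          case False
          then have "t \<in> R" unfolding R_def using \<open>t \<in> I\<close> nt0 by simp
          then have "k < f t" using RI by simp
          then show ?thesis using \<open>t \<in> I\<close> \<open>t \<in> R\<close> nt0 False unfolding merge_def h_def by simp
        qed
      qed
    qed
  qed
  have "splt I t0 k f = (L, g, h)" unfolding splt_def L_def g_def h_def R_def by simp
  then show ?thesis using LI cL gpfs hpfs mg unfolding R_def by blast
qed



lemma finite_pfs: "finite I \<Longrightarrow> finite (pfs I)"
  unfolding pfs_def by (rule finite_subset[of _ "I \<rightarrow>\<^sub>E {1..card I}"]) (auto intro: finite_PiE)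

lemma card_D:
  assumes I: "finite I" and t0: "t0 \<in> I" and k: "1 \<le> k" "k \<le> card I"
  shows "card {f\<in>pfs I. f t0 = k \<and> card {t\<in>I. f t \<le> k} = k}
       = ((card I - 1) choose (k - 1)) * (k ^ (k - 2) * Suc (card I - k) ^ (card I - k - 1))"
proof -
  define Ls where "Ls = {L. L \<subseteq> I - {t0} \<and> card L = k - 1}"
  define S where "S = Sigma Ls (\<lambda>L. pfs L \<times> pfs (I - insert t0 L))"
  define DD where "DD = {f\<in>pfs I. f t0 = k \<and> card {t\<in>I. f t \<le> k} = k}"
  have "bij_betw (merge I t0 k) S DD"
  proof (rule bij_betw_byWitness[where f'="splt I t0 k"])
    show "\<forall>a\<in>S. splt I t0 k (merge I t0 k a) = a"
    proof
      fix a assume a: "a \<in> S"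
      obtain L g h where e: "a = (L, g, h)" by (cases a) auto
      have "L \<subseteq> I - {t0}" "card L = k - 1" "g \<in> pfs L" "h \<in> pfs (I - insert t0 L)"
        using a unfolding e S_def Ls_def by auto
      then show "splt I t0 k (merge I t0 k a) = a" using merge_good[OF I t0 k] unfolding e by blast
    qed
    show "\<forall>a'\<in>DD. merge I t0 k (splt I t0 k a') = a'"
    proof
      fix f assume "f \<in> DD"
      then have "f \<in> pfs I" "f t0 = k" "card {t\<in>I. f t \<le> k} = k" unfolding DD_def by auto
      from splt_good[OF I t0 k this] show "merge I t0 k (splt I t0 k f) = f" by auto
    qed
    show "merge I t0 k ` S \<subseteq> DD"
    proof
      fix b assume "b \<in> merge I t0 k ` S"
      then obtain a where a: "a \<in> S" and b: "b = merge I t0 k a" by blast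
      obtain L g h where e: "a = (L, g, h)" by (cases a) auto
      have "L \<subseteq> I - {t0}" "card L = k - 1" "g \<in> pfs L" "h \<in> pfs (I - insert t0 L)"
        using a unfolding e S_def Ls_def by auto
      from merge_good[OF I t0 k this] show "b \<in> DD" unfolding b e DD_def by blast
    qed
    show "splt I t0 k ` DD \<subseteq> S"
    proof
      fix b assume "b \<in> splt I t0 k ` DD"
      then obtain f where f: "f \<in> DD" and b: "b = splt I t0 k f" by blast
      then have "f \<in> pfs I" "f t0 = k" "card {t\<in>I. f t \<le> k} = k" unfolding DD_def by auto
      from splt_good[OF I t0 k this] show "b \<in> S" unfolding b S_def Ls_def by auto
    qed
  qed
  then have "card DD = card S" by (simp add: bij_betw_same_card)
  also have "card S = (\<Sum>L\<in>Ls. card (pfs L \<times> pfs (I - insert t0 L)))"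
  proof -
    have "Ls \<subseteq> Pow (I - {t0})" unfolding Ls_def by auto
    then have "finite Ls" by (rule finite_subset) (simp add: I)
    moreover have "\<forall>L\<in>Ls. finite (pfs L \<times> pfs (I - insert t0 L))"
    proof
      fix L assume "L \<in> Ls"
      then have "L \<subseteq> I" unfolding Ls_def by auto
      then have "finite L" using I by (rule finite_subset)
      then show "finite (pfs L \<times> pfs (I - insert t0 L))" using I by (simp add: finite_pfs)
    qed
    ultimately show ?thesis unfolding S_def by (rule card_SigmaI)
  qed
  also have "\<dots> = (\<Sum>L\<in>Ls. k ^ (k - 2) * Suc (card I - k) ^ (card I - k - 1))"
  proof (rule sum.cong)
    fix L assume L: "L \<in> Ls"
    then have LI: "L \<subseteq> I - {t0}" "card L = k - 1" unfolding Ls_def by auto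
    have finL: "finite L" using LI I finite_subset by blast
    have t0L: "t0 \<notin> L" using LI by auto
    have cins: "card (insert t0 L) = k" using finL t0L LI k by simp
    have cR: "card (I - insert t0 L) = card I - k" using cins LI t0 I finL
      by (subst card_Diff_subset) auto
    have "card (pfs L) = k ^ (k - 2)" using card_pfs[OF finL] LI k by (simp add: numeral_2_eq_2)
    moreover have "card (pfs (I - insert t0 L)) = Suc (card I - k) ^ (card I - k - 1)"
      using card_pfs[of "I - insert t0 L"] cR I by simp
    ultimately show "card (pfs L \<times> pfs (I - insert t0 L)) = k ^ (k - 2) * Suc (card I - k) ^ (card I - k - 1)"
      by (simp add: card_cartesian_product)
  qed simp
  also have "\<dots> = card Ls * (k ^ (k - 2) * Suc (card I - k) ^ (card I - k - 1))" by simp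
  also have "card Ls = (card I - 1) choose (k - 1)"
    unfolding Ls_def using n_subsets[of "I - {t0}" "k - 1"] I t0 by simp
  finally show ?thesis unfolding DD_def .
qed



lemma upd_PiE: "f \<in> I \<rightarrow>\<^sub>E S \<Longrightarrow> t0 \<in> I \<Longrightarrow> v \<in> S \<Longrightarrow> f(t0 := v) \<in> I \<rightarrow>\<^sub>E S"
  by (rule PiE_I) (auto dest: PiE_mem PiE_arb)

lemma A_step:
  assumes I: "finite I" and t0: "t0 \<in> I" and k: "1 \<le> k" "k \<le> card I"
  shows "card {f\<in>pfs I. f t0 = k} = card {f\<in>pfs I. f t0 = k \<and> card {t\<in>I. f t \<le> k} = k}
           + card {f\<in>pfs I. f t0 = Suc k}"
proof -
  define n where "n = card I"
  define Oth where "Oth = {f\<in>pfs I. f t0 = k \<and> card {t\<in>I. f t \<le> k} \<noteq> k}"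
  have split: "{f\<in>pfs I. f t0 = k} = {f\<in>pfs I. f t0 = k \<and> card {t\<in>I. f t \<le> k} = k} \<union> Oth"
    unfolding Oth_def by auto
  have fin: "finite (pfs I)" using I by (rule finite_pfs)
  have c1: "card {f\<in>pfs I. f t0 = k} = card {f\<in>pfs I. f t0 = k \<and> card {t\<in>I. f t \<le> k} = k} + card Oth"
    unfolding split using fin by (intro card_Un_disjoint) (auto simp: Oth_def)
  have same: "{t\<in>I. (f(t0 := v)) t \<le> i} = {t\<in>I. f t \<le> i}" if "(v \<le> i) = (f t0 \<le> i)" for f :: "'a \<Rightarrow> nat" and v i
    using that by auto
  have "bij_betw (\<lambda>f. f(t0 := Suc k)) Oth {f\<in>pfs I. f t0 = Suc k}"
  proof (rule bij_betw_byWitness[where f'="\<lambda>f. f(t0 := k)"])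
    show "\<forall>a\<in>Oth. (a(t0 := Suc k))(t0 := k) = a" unfolding Oth_def by auto
    show "\<forall>a\<in>{f\<in>pfs I. f t0 = Suc k}. (a(t0 := k))(t0 := Suc k) = a" by auto
    show "(\<lambda>f. f(t0 := Suc k)) ` Oth \<subseteq> {f\<in>pfs I. f t0 = Suc k}"
    proof
      fix g assume "g \<in> (\<lambda>f. f(t0 := Suc k)) ` Oth"
      then obtain f where f: "f \<in> Oth" and g: "g = f(t0 := Suc k)" by blast
      have fP: "f \<in> I \<rightarrow>\<^sub>E {1..n}" "pfc I f" "f t0 = k" "card {t\<in>I. f t \<le> k} \<noteq> k"
        using f unfolding Oth_def pfs_def n_def by auto
      have fpf: "i \<le> card {t\<in>I. f t \<le> i}" if "i \<in> {1..n}" for i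
        using fP(2) that unfolding pfc_def n_def by simp
      have "k \<le> card {t\<in>I. f t \<le> k}" using fpf[of k] k n_def by simp
      then have gt: "k < card {t\<in>I. f t \<le> k}" using fP(4) by simp
      have "card {t\<in>I. f t \<le> k} \<le> n" unfolding n_def using I by (intro card_mono) auto
      then have kn: "Suc k \<le> n" using gt by simp
      have "g \<in> pfs I" unfolding pfs_def pfc_def n_def[symmetric]
      proof (intro CollectI conjI ballI)
        show "g \<in> I \<rightarrow>\<^sub>E {1..n}" unfolding g using upd_PiE[OF fP(1) t0] kn by simp
      next
        fix i assume i: "i \<in> {1..n}"
        show "i \<le> card {t\<in>I. g t \<le> i}"
        proof (cases "i = k")
          case False
          then have "{t\<in>I. g t \<le> i} = {t\<in>I. f t \<le> i}" unfolding g using same fP(3) by auto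
          then show ?thesis using fpf[OF i] by simp
        next
          case True
          have "{t\<in>I. g t \<le> i} = {t\<in>I. f t \<le> k} - {t0}" unfolding g True using fP(3) by auto
          moreover have "card ({t\<in>I. f t \<le> k} - {t0}) = card {t\<in>I. f t \<le> k} - 1"
            using t0 fP(3) I by (subst card_Diff_singleton) auto
          ultimately show ?thesis using gt True by simp
        qed
      qed
      then show "g \<in> {f\<in>pfs I. f t0 = Suc k}" unfolding g by simp
    qed
    show "(\<lambda>f. f(t0 := k)) ` {f\<in>pfs I. f t0 = Suc k} \<subseteq> Oth"
    proof
      fix g assume "g \<in> (\<lambda>f. f(t0 := k)) ` {f\<in>pfs I. f t0 = Suc k}"
      then obtain f where f: "f \<in> pfs I" "f t0 = Suc k" and g: "g = f(t0 := k)" by blast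
      have fP: "f \<in> I \<rightarrow>\<^sub>E {1..n}" "pfc I f"
        using f unfolding pfs_def n_def by auto
      have fpf: "i \<le> card {t\<in>I. f t \<le> i}" if "i \<in> {1..n}" for i
        using fP(2) that unfolding pfc_def n_def by simp
      have ins: "{t\<in>I. g t \<le> k} = insert t0 {t\<in>I. f t \<le> k}" unfolding g using t0 f(2) by auto
      have "card {t\<in>I. g t \<le> k} = Suc (card {t\<in>I. f t \<le> k})"
        unfolding ins using I f(2) by (subst card_insert_disjoint) auto
      moreover have "k \<le> card {t\<in>I. f t \<le> k}" using fpf[of k] k n_def by simp
      ultimately have gk: "Suc k \<le> card {t\<in>I. g t \<le> k}" by simp
      have "g \<in> pfs I" unfolding pfs_def pfc_def n_def[symmetric]
      proof (intro CollectI conjI ballI)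
        show "g \<in> I \<rightarrow>\<^sub>E {1..n}" unfolding g using upd_PiE[OF fP(1) t0] k n_def by simp
      next
        fix i assume i: "i \<in> {1..n}"
        show "i \<le> card {t\<in>I. g t \<le> i}"
        proof (cases "i = k")
          case False
          then have "{t\<in>I. g t \<le> i} = {t\<in>I. f t \<le> i}" unfolding g using same f(2) by auto
          then show ?thesis using fpf[OF i] by simp
        next
          case True then show ?thesis using gk by simp
        qed
      qed
      moreover have "g t0 = k" unfolding g by simp
      moreover have "card {t\<in>I. g t \<le> k} \<noteq> k" using gk by simp
      ultimately show "g \<in> Oth" unfolding Oth_def by blast
    qed
  qed
  then have "card Oth = card {f\<in>pfs I. f t0 = Suc k}" by (rule bij_betw_same_card)
  then show ?thesis using c1 by simp
qed



definition Dc :: "nat \<Rightarrow> nat \<Rightarrow> nat" where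
  "Dc n m = ((n - 1) choose (m - 1)) * (m ^ (m - 2) * Suc (n - m) ^ (n - m - 1))"

lemma A_closed:
  assumes I: "finite I" and t0: "t0 \<in> I" and k: "1 \<le> k" "k \<le> Suc (card I)"
  shows "card {f\<in>pfs I. f t0 = k} = (\<Sum>m=k..card I. Dc (card I) m)"
  using k(2) k(1)
proof (induction k rule: inc_induct)
  case base
  have "{f\<in>pfs I. f t0 = Suc (card I)} = {}"
  proof -
    have "f t0 \<le> card I" if "f \<in> pfs I" for f
      using PiE_mem[of f I "\<lambda>_. {1..card I}" t0] that t0 unfolding pfs_def by auto
    then show ?thesis by fastforce
  qed
  then have "card {f\<in>pfs I. f t0 = Suc (card I)} = 0" by (simp only: card.empty)
  then show ?case by simp
next
  case (step j)
  have j: "1 \<le> j" "j \<le> card I" using step by auto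
  have "card {f\<in>pfs I. f t0 = j} = Dc (card I) j + card {f\<in>pfs I. f t0 = Suc j}"
    using A_step[OF I t0 j] card_D[OF I t0 j] unfolding Dc_def by simp
  also have "\<dots> = Dc (card I) j + (\<Sum>m=Suc j..card I. Dc (card I) m)" using step by simp
  also have "\<dots> = (\<Sum>m=j..card I. Dc (card I) m)" using j by (simp add: sum.atLeast_Suc_atMost)
  finally show ?case .
qed

lemma bridge:
  "card {xs \<in> parking_functions n. xs ! 0 = k} = card {f\<in>pfs {0..<n}. f 0 = k}" if n: "1 \<le> n"
proof -
  define \<phi> where "\<phi> xs = restrict (\<lambda>t. xs ! t) {0..<n}" for xs :: "nat list"
  have "bij_betw \<phi> {xs \<in> parking_functions n. xs ! 0 = k} {f\<in>pfs {0..<n}. f 0 = k}"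
  proof (rule bij_betw_byWitness[where f'="\<lambda>f. map f [0..<n]"])
    show "\<forall>a\<in>{xs \<in> parking_functions n. xs ! 0 = k}. map (\<phi> a) [0..<n] = a"
    proof
      fix xs assume "xs \<in> {xs \<in> parking_functions n. xs ! 0 = k}"
      then have l: "length xs = n" unfolding parking_functions_def by simp
      show "map (\<phi> xs) [0..<n] = xs" by (rule nth_equalityI) (auto simp: l \<phi>_def)
    qed
    show "\<forall>a'\<in>{f\<in>pfs {0..<n}. f 0 = k}. \<phi> (map a' [0..<n]) = a'"
    proof
      fix f assume "f \<in> {f\<in>pfs {0..<n}. f 0 = k}"
      then have f: "f \<in> {0..<n} \<rightarrow>\<^sub>E {1..card {0..<n}}" unfolding pfs_def by simp
      show "\<phi> (map f [0..<n]) = f"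
      proof
        fix t show "\<phi> (map f [0..<n]) t = f t"
        proof (cases "t < n")
          case True then show ?thesis unfolding \<phi>_def by simp
        next
          case False
          then have "f t = undefined" using f by (intro PiE_arb[OF f]) simp
          then show ?thesis using False unfolding \<phi>_def by simp
        qed
      qed
    qed
    show "\<phi> ` {xs \<in> parking_functions n. xs ! 0 = k} \<subseteq> {f\<in>pfs {0..<n}. f 0 = k}"
    proof
      fix g assume "g \<in> \<phi> ` {xs \<in> parking_functions n. xs ! 0 = k}"
      then obtain xs where xs: "xs \<in> parking_functions n" "xs ! 0 = k" and g: "g = \<phi> xs" by blast
      have P: "length xs = n" "\<forall>t<n. 1 \<le> xs ! t \<and> xs ! t \<le> n"
        "\<forall>i\<in>{1..n}. i \<le> card {t. t < n \<and> xs ! t \<le> i}"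
        using xs(1) unfolding parking_functions_def by auto
      have eq: "{t\<in>{0..<n}. g t \<le> i} = {t. t < n \<and> xs ! t \<le> i}" for i unfolding g \<phi>_def by auto
      have "g \<in> {0..<n} \<rightarrow>\<^sub>E {1..n}" using P(2) unfolding g \<phi>_def by auto
      moreover have "\<forall>i\<in>{1..n}. i \<le> card {t\<in>{0..<n}. g t \<le> i}" unfolding eq using P(3) by simp
      ultimately have "g \<in> pfs {0..<n}" unfolding pfs_def pfc_def card_atLeastLessThan by simp
      moreover have "g 0 = k" using xs(2) n unfolding g \<phi>_def by simp
      ultimately show "g \<in> {f\<in>pfs {0..<n}. f 0 = k}" by simp
    qed
    show "(\<lambda>f. map f [0..<n]) ` {f\<in>pfs {0..<n}. f 0 = k} \<subseteq> {xs \<in> parking_functions n. xs ! 0 = k}"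
    proof
      fix xs assume "xs \<in> (\<lambda>f. map f [0..<n]) ` {f\<in>pfs {0..<n}. f 0 = k}"
      then obtain f where f: "f \<in> pfs {0..<n}" "f 0 = k" and xs: "xs = map f [0..<n]" by blast
      have fP: "f \<in> {0..<n} \<rightarrow>\<^sub>E {1..n}" "\<forall>i\<in>{1..n}. i \<le> card {t\<in>{0..<n}. f t \<le> i}"
        using f(1) unfolding pfs_def pfc_def by auto
      have eq: "{t. t < n \<and> xs ! t \<le> i} = {t\<in>{0..<n}. f t \<le> i}" for i unfolding xs by auto
      have p3: "\<forall>i\<in>{1..n}. i \<le> card {t. t < n \<and> xs ! t \<le> i}" unfolding eq using fP(2) by simp
      have p2: "\<forall>t<n. 1 \<le> xs ! t \<and> xs ! t \<le> n" unfolding xs using fP(1) by (auto dest: PiE_mem)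
      have "xs \<in> parking_functions n" unfolding parking_functions_def using p2 p3 unfolding xs by simp
      moreover have "xs ! 0 = k" using f(2) n unfolding xs by simp
      ultimately show "xs \<in> {xs \<in> parking_functions n. xs ! 0 = k}" by simp
    qed
  qed
  then show ?thesis by (rule bij_betw_same_card)
qed

lemma powi1: "real (s + 1) powi (int s - 1) = real (Suc s) ^ (s - 1)"
proof (cases s)
  case 0 then show ?thesis by simp
next
  case (Suc m)
  then have "int s - 1 = int m" by simp
  then show ?thesis using Suc by simp
qed

lemma powi2: assumes "1 \<le> d" shows "real d powi (int d - 2) = real d ^ (d - 2)"
proof (cases "d = 1")
  case True
  then show ?thesis by simp
next
  case False
  then have e: "int d - 2 = int (d - 2)" using assms by simp
  show ?thesis unfolding e by (rule power_int_of_nat)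
qed

theorem corollary1:
  fixes n k :: nat
  assumes "1 \<le> n" and "1 \<le> k" and "k \<le> n"
  shows "real (card {xs \<in> parking_functions n. xs ! 0 = k}) =
    (\<Sum>s=0..n-k. real ((n-1) choose s) * real (s+1) powi (int s - 1)
                  * real (n-s) powi (int n - int s - 2))"
proof -
  have key: "real (Dc n (n - s)) = real ((n-1) choose s) * real (s+1) powi (int s - 1)
                  * real (n-s) powi (int n - int s - 2)" if s: "s \<le> n - k" for s
  proof -
    have sn: "s < n" "s \<le> n - 1" using s assms by auto
    have "Dc n (n - s) = ((n-1) choose s) * ((n - s) ^ (n - s - 2) * Suc s ^ (s - 1))"
    proof -
      have "n - s - 1 = (n - 1) - s" by simp
      then have "(n - 1) choose (n - s - 1) = (n - 1) choose s"
        using binomial_symmetric[of s "n - 1"] sn by simp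
      moreover have "n - (n - s) = s" using sn by simp
      ultimately show ?thesis unfolding Dc_def by simp
    qed
    moreover have "int n - int s - 2 = int (n - s) - 2" using sn by simp
    moreover have "real (n - s) powi (int (n - s) - 2) = real (n - s) ^ (n - s - 2)"
      using powi2[of "n - s"] sn by simp
    ultimately show ?thesis unfolding powi1 by (simp del: of_nat_diff)
  qed
  have "card {xs \<in> parking_functions n. xs ! 0 = k} = (\<Sum>m=k..n. Dc n m)"
    using bridge[OF assms(1)] A_closed[of "{0..<n}" 0 k] assms by simp
  then have "real (card {xs \<in> parking_functions n. xs ! 0 = k}) = (\<Sum>m=k..n. real (Dc n m))" by simp
  also have "\<dots> = (\<Sum>s=0..n-k. real ((n-1) choose s) * real (s+1) powi (int s - 1)
                  * real (n-s) powi (int n - int s - 2))"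
  proof (rule sum.reindex_bij_witness[where i="\<lambda>m. n - m" and j="\<lambda>s. n - s"])
    fix m assume m: "m \<in> {k..n}"
    show "n - (n - m) = m" using m by auto
    show "n - m \<in> {0..n-k}" using m by auto
    have "n - m \<le> n - k" using m by auto
    from key[OF this] show "real ((n-1) choose (n - m)) * real (n - m + 1) powi (int (n - m) - 1)
                  * real (n - (n - m)) powi (int n - int (n - m) - 2) = real (Dc n m)"
      using m by simp
  next
    fix s assume s: "s \<in> {0..n-k}"
    show "n - (n - s) = s" using s assms by auto
    show "n - s \<in> {k..n}" using s assms by auto
  qed
  finally show ?thesis .
qed


end
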